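(* Let $A\in\mathbb{R}^{K\times M}$, $\boldsymbol\beta\in\mathbb{R}^K$, $C>0$, with $\mathcal F_0=\{\mathbf w\in\mathbb{R}^M:A\mathbf w=\boldsymbol\beta,\ \mathbf 0\le\mathbf w\le C\mathbf 1\}$ nonempty. Let $\hat A_n,\hat{\boldsymbol\beta}_n$ be random with $\max_{i,j}|\hat A_{n,ij}-A_{ij}|=O_p(n^{-1/2})$ and $\|\hat{\boldsymbol\beta}_n-\boldsymbol\beta\|_\infty=O_p(n^{-1/2})$, let $\hat m_n=\min_{\mathbf 0\le\mathbf w\le C\mathbf 1}\|\hat A_n\mathbf w-\hat{\boldsymbol\beta}_n\|_\infty$, and for a deterministic sequence $\kappa_n>0$ let $\mathcal F_n=\{\mathbf w:\|\hat A_n\mathbf w-\hat{\boldsymbol\beta}_n\|_\infty\le\kappa_n/\sqrt n+\hat m_n,\ \mathbf 0\le\mathbf w\le C\mathbf 1\}$. Then: (i) if $\kappa_n\to\infty$ and $\kappa_n/\sqrt n\to0$, then $d_H(\mathcal F_n,\mathcal F_0)=O_p(\kappa_n/\sqrt n)$; (ii) if $A$ has full column rank and $\kappa_n$ is bounded, then $d_H(\mathcal F_n,\mathcal F_0)=O_p(n^{-1/2})$.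
   Context: For sets $S,T\subseteq\mathbb{R}^M$, the Hausdorff distance is $d_H(S,T)=\max\{\sup_{s\in S}\mathrm{dist}(s,T),\sup_{t\in T}\mathrm{dist}(t,S)\}$ with $\mathrm{dist}(u,T)=\inf_{v\in T}\|u-v\|_2$. $\|\cdot\|_\infty$ is the maximum absolute entry of a vector. *)

theory Defs
  imports "HOL-Analysis.Analysis" "HOL-Probability.Probability"
begin

definition hausd :: "'a::metric_space set \<Rightarrow> 'a set \<Rightarrow> real" where
  "hausd S T = max (SUP s\<in>S. infdist s T) (SUP t\<in>T. infdist t S)"

definition outer_prob :: "'a measure \<Rightarrow> 'a set \<Rightarrow> real" where
  "outer_prob P S = Inf {measure P T | T. T \<in> sets P \<and> S \<inter> space P \<subseteq> T}"

definition bigOp :: "'a measure \<Rightarrow> (nat \<Rightarrow> 'a \<Rightarrow> real) \<Rightarrow> (nat \<Rightarrow> real) \<Rightarrow> bool" where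
  "bigOp P X r \<longleftrightarrow> (\<forall>\<epsilon>>0. \<exists>B>0. \<exists>N. \<forall>n\<ge>N.
      outer_prob P {\<omega>\<in>space P. \<bar>X n \<omega>\<bar> > B * r n} < \<epsilon>)"

definition box0C :: "real \<Rightarrow> (real^'m) set" where
  "box0C C = {w. \<forall>i. 0 \<le> w$i \<and> w$i \<le> C}"

definition feas0 :: "real^'m^'k \<Rightarrow> real^'k \<Rightarrow> real \<Rightarrow> (real^'m) set" where
  "feas0 A \<beta> C = {w \<in> box0C C. A *v w = \<beta>}"

definition mhat :: "real^'m^'k \<Rightarrow> real^'k \<Rightarrow> real \<Rightarrow> real" where
  "mhat A b C = Inf ((\<lambda>w. infnorm (A *v w - b)) ` box0C C)"

definition feasn :: "real^'m^'k \<Rightarrow> real^'k \<Rightarrow> real \<Rightarrow> real \<Rightarrow> (real^'m) set" where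
  "feasn A b C t = {w \<in> box0C C. infnorm (A *v w - b) \<le> t + mhat A b C}"

end

theory Submission
  imports Defs
begin


definition goodrep :: "'a::euclidean_space set \<Rightarrow> real \<Rightarrow> bool" where
  "goodrep S c \<longleftrightarrow> c \<ge> 0 \<and> (\<forall>\<mu>. (\<forall>s\<in>S. \<mu> s \<ge> 0) \<longrightarrow> (\<exists>\<nu>. (\<forall>s\<in>S. \<nu> s \<ge> 0) \<and>
      (\<Sum>s\<in>S. \<nu> s *\<^sub>R s) = (\<Sum>s\<in>S. \<mu> s *\<^sub>R s) \<and>
      sum \<nu> S \<le> c * norm (\<Sum>s\<in>S. \<mu> s *\<^sub>R s)))"

lemma goodrepD:
  assumes "goodrep S c" "\<forall>s\<in>S. \<mu> s \<ge> 0"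
  shows "\<exists>\<nu>. (\<forall>s\<in>S. \<nu> s \<ge> 0) \<and>
      (\<Sum>s\<in>S. \<nu> s *\<^sub>R s) = (\<Sum>s\<in>S. \<mu> s *\<^sub>R s) \<and>
      sum \<nu> S \<le> c * norm (\<Sum>s\<in>S. \<mu> s *\<^sub>R s)"
  using assms unfolding goodrep_def by blast

lemma bounded_rep:
  fixes S :: "'a::euclidean_space set"
  assumes "finite S"
  shows "\<exists>c. goodrep S c"
  using assms
proof (induction "card S" arbitrary: S rule: less_induct)
  case less
  show ?case
  proof (cases "0 \<in> convex hull S")
    case False
    have "closed (convex hull S)"
      using less.prems by (simp add: compact_imp_closed finite_imp_compact_convex_hull)
    then obtain m where m: "m > 0" "\<And>x. x \<in> convex hull S \<Longrightarrow> m \<le> dist 0 x"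
      using separate_point_closed[OF _ False] by blast
    show ?thesis unfolding goodrep_def
    proof (intro exI[of _ "1/m"] conjI allI impI)
      show "0 \<le> 1/m" using m by simp
      fix \<mu> :: "'a \<Rightarrow> real" assume mu: "\<forall>s\<in>S. 0 \<le> \<mu> s"
      show "\<exists>\<nu>. (\<forall>s\<in>S. \<nu> s \<ge> 0) \<and> (\<Sum>s\<in>S. \<nu> s *\<^sub>R s) = (\<Sum>s\<in>S. \<mu> s *\<^sub>R s) \<and>
      sum \<nu> S \<le> 1/m * norm (\<Sum>s\<in>S. \<mu> s *\<^sub>R s)"
      proof (intro exI[of _ \<mu>] conjI)
        show "\<forall>s\<in>S. 0 \<le> \<mu> s" by fact
        show "(\<Sum>s\<in>S. \<mu> s *\<^sub>R s) = (\<Sum>s\<in>S. \<mu> s *\<^sub>R s)" ..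
        define \<sigma> where "\<sigma> = sum \<mu> S"
        have s0: "\<sigma> \<ge> 0" unfolding \<sigma>_def using mu by (simp add: sum_nonneg)
        show "sum \<mu> S \<le> 1/m * norm (\<Sum>s\<in>S. \<mu> s *\<^sub>R s)"
        proof (cases "\<sigma> = 0")
          case True then show ?thesis using m by (simp add: \<sigma>_def)
        next
          case False
          hence sp: "\<sigma> > 0" using s0 by simp
          have "(\<Sum>s\<in>S. (\<mu> s / \<sigma>) *\<^sub>R s) \<in> convex hull S"
            unfolding convex_hull_finite[OF less.prems]
            using mu sp by (auto intro!: exI[of _ "\<lambda>s. \<mu> s / \<sigma>"] simp: sum_divide_distrib[symmetric] \<sigma>_def)
          hence "m \<le> norm (\<Sum>s\<in>S. (\<mu> s / \<sigma>) *\<^sub>R s)" using m by (simp add: dist_norm)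
          also have "(\<Sum>s\<in>S. (\<mu> s / \<sigma>) *\<^sub>R s) = (1/\<sigma>) *\<^sub>R (\<Sum>s\<in>S. \<mu> s *\<^sub>R s)"
            by (simp add: scaleR_sum_right divide_inverse_commute)
          finally have "m \<le> norm (\<Sum>s\<in>S. \<mu> s *\<^sub>R s) / \<sigma>" using sp by simp
          hence "m * \<sigma> \<le> norm (\<Sum>s\<in>S. \<mu> s *\<^sub>R s)" using sp by (simp add: field_simps)
          thus ?thesis using m by (simp add: \<sigma>_def field_simps)
        qed
      qed
    qed
  next
    case True
    then obtain \<theta> where th: "\<forall>s\<in>S. 0 \<le> \<theta> s" "sum \<theta> S = 1" "(\<Sum>s\<in>S. \<theta> s *\<^sub>R s) = 0"
      unfolding convex_hull_finite[OF less.prems] by blast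
    have Sne: "S \<noteq> {}" using th(2) by auto
    have "\<forall>s\<in>S. \<exists>c. goodrep (S-{s}) c"
    proof
      fix s assume sS: "s \<in> S"
      have "card (S-{s}) < card S" using less.prems sS by (rule card_Diff1_less)
      moreover have "finite (S-{s})" using less.prems by simp
      ultimately show "\<exists>c. goodrep (S-{s}) c" by (rule less.hyps)
    qed
    then have "\<exists>cf. \<forall>s\<in>S. goodrep (S-{s}) (cf s)" by (rule bchoice)
    then obtain cf where cfg: "\<forall>s\<in>S. goodrep (S-{s}) (cf s)" ..
    have cf1: "\<And>s. s\<in>S \<Longrightarrow> cf s \<ge> 0" using cfg unfolding goodrep_def by blast
    note cf2 = goodrepD[OF cfg[rule_format]]
    define c where "c = Max (cf ` S)"
    have cge: "\<And>s. s \<in> S \<Longrightarrow> cf s \<le> c" unfolding c_def using less.prems by simp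
    show ?thesis unfolding goodrep_def
    proof (intro exI[of _ c] conjI allI impI)
      obtain s1 where "s1 \<in> S" using Sne by blast
      then show "0 \<le> c" using cf1 cge order_trans by blast
      fix \<mu> :: "'a \<Rightarrow> real" assume mu: "\<forall>s\<in>S. 0 \<le> \<mu> s"
      define T where "T = {s\<in>S. \<theta> s > 0}"
      have Tf: "finite T" "T \<noteq> {}"
        using less.prems th Sne unfolding T_def
        by (auto, metis (no_types, lifting) less_eq_real_def sum_nonneg_eq_0_iff zero_neq_one)
      define t where "t = Min ((\<lambda>s. \<mu> s / \<theta> s) ` T)"
      have "t \<in> (\<lambda>s. \<mu> s / \<theta> s) ` T" unfolding t_def using Tf by (intro Min_in) auto
      then obtain s0 where s0: "s0 \<in> T" "t = \<mu> s0 / \<theta> s0" by blast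
      have tle: "\<And>s. s \<in> T \<Longrightarrow> t \<le> \<mu> s / \<theta> s" unfolding t_def using Tf by simp
      have t0: "t \<ge> 0" using s0 mu unfolding T_def by auto
      define \<mu>' where "\<mu>' = (\<lambda>s. \<mu> s - t * \<theta> s)"
      have mu'0: "\<forall>s\<in>S. \<mu>' s \<ge> 0"
      proof
        fix s assume sS: "s \<in> S"
        show "\<mu>' s \<ge> 0"
        proof (cases "\<theta> s > 0")
          case True
          hence "t \<le> \<mu> s / \<theta> s" using tle sS T_def by auto
          thus ?thesis using True unfolding \<mu>'_def by (simp add: field_simps)
        next
          case False
          hence "\<theta> s = 0" using th sS by force
          thus ?thesis using mu sS unfolding \<mu>'_def by simp
        qed
      qed
      have s0S: "s0 \<in> S" and th0: "\<theta> s0 > 0" using s0 T_def by auto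
      have mus0: "\<mu>' s0 = 0" unfolding \<mu>'_def using s0 th0 by simp
      have eq1: "(\<Sum>s\<in>S. \<mu>' s *\<^sub>R s) = (\<Sum>s\<in>S. \<mu> s *\<^sub>R s)"
      proof -
        have "(\<Sum>s\<in>S. (t * \<theta> s) *\<^sub>R s) = t *\<^sub>R (\<Sum>s\<in>S. \<theta> s *\<^sub>R s)"
          by (simp add: scaleR_sum_right)
        also have "\<dots> = 0" using th(3) by simp
        finally show ?thesis unfolding \<mu>'_def
          by (simp add: scaleR_diff_left sum_subtractf)
      qed
      have eq2: "(\<Sum>s\<in>S. \<mu>' s *\<^sub>R s) = (\<Sum>s\<in>S-{s0}. \<mu>' s *\<^sub>R s)"
        using s0S mus0 less.prems by (simp add: sum.remove)
      obtain \<nu> where nu: "\<forall>s'\<in>S-{s0}. \<nu> s' \<ge> 0"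
        "(\<Sum>s'\<in>S-{s0}. \<nu> s' *\<^sub>R s') = (\<Sum>s'\<in>S-{s0}. \<mu>' s' *\<^sub>R s')"
        "sum \<nu> (S-{s0}) \<le> cf s0 * norm (\<Sum>s'\<in>S-{s0}. \<mu>' s' *\<^sub>R s')"
        using cf2[OF s0S, of \<mu>'] mu'0 by auto
      define \<nu>' where "\<nu>' = \<nu>(s0 := 0)"
      show "\<exists>\<nu>. (\<forall>s\<in>S. \<nu> s \<ge> 0) \<and> (\<Sum>s\<in>S. \<nu> s *\<^sub>R s) = (\<Sum>s\<in>S. \<mu> s *\<^sub>R s) \<and>
        sum \<nu> S \<le> c * norm (\<Sum>s\<in>S. \<mu> s *\<^sub>R s)"
      proof (intro exI[of _ \<nu>'] conjI)
        show "\<forall>s\<in>S. 0 \<le> \<nu>' s" using nu(1) unfolding \<nu>'_def by auto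
        have a: "(\<Sum>s\<in>S. \<nu>' s *\<^sub>R s) = (\<Sum>s\<in>S-{s0}. \<nu> s *\<^sub>R s)"
          using s0S less.prems unfolding \<nu>'_def by (simp add: sum.remove)
        show "(\<Sum>s\<in>S. \<nu>' s *\<^sub>R s) = (\<Sum>s\<in>S. \<mu> s *\<^sub>R s)"
          using a nu(2) eq1 eq2 by simp
        have b: "sum \<nu>' S = sum \<nu> (S-{s0})"
          using s0S less.prems unfolding \<nu>'_def by (simp add: sum.remove)
        have "cf s0 * norm (\<Sum>s'\<in>S-{s0}. \<mu>' s' *\<^sub>R s') \<le> c * norm (\<Sum>s'\<in>S-{s0}. \<mu>' s' *\<^sub>R s')"
          using cge[OF s0S] by (simp add: mult_right_mono)
        then show "sum \<nu>' S \<le> c * norm (\<Sum>s\<in>S. \<mu> s *\<^sub>R s)"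
          using b nu(3) eq1 eq2 by simp
      qed
    qed
  qed
qed


lemma cone_rep:
  fixes S :: "'a::euclidean_space set"
  assumes "finite S" "v \<in> convex_cone hull S"
  shows "\<exists>\<mu>. (\<forall>s\<in>S. \<mu> s \<ge> 0) \<and> v = (\<Sum>s\<in>S. \<mu> s *\<^sub>R s)"
proof (cases "v = 0")
  case True then show ?thesis by (intro exI[of _ "\<lambda>_. 0"]) simp
next
  case False
  then obtain x c where "x \<in> convex hull S" "c \<ge> 0" "v = c *\<^sub>R x"
    using assms(2) unfolding convex_cone_hull_convex_hull by auto
  moreover from \<open>x \<in> convex hull S\<close> obtain u where "\<forall>s\<in>S. 0 \<le> u s" "x = (\<Sum>s\<in>S. u s *\<^sub>R s)"
    unfolding convex_hull_finite[OF assms(1)] by auto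
  ultimately show ?thesis
    by (intro exI[of _ "\<lambda>s. c * u s"]) (auto simp: scaleR_sum_right)
qed

lemma closed_cone_hull_finite:
  fixes S :: "'a::euclidean_space set"
  assumes "finite S"
  shows "closed (convex_cone hull S)"
proof -
  have "polytope (convex hull S)" using assms unfolding polytope_def by blast
  hence "closed (conic hull (convex hull S))" by (simp add: closed_conic_hull_strong)
  thus ?thesis unfolding convex_cone_hull_separate by simp
qed

lemma hoffman:
  fixes I :: "('a::euclidean_space \<times> real) set"
  assumes "finite I" and Pdef: "P = {x. \<forall>(a,b)\<in>I. inner a x \<le> b}" and "P \<noteq> {}"
  shows "\<exists>H\<ge>0. \<forall>x e. e \<ge> 0 \<longrightarrow> (\<forall>(a,b)\<in>I. inner a x - b \<le> e) \<longrightarrow> infdist x P \<le> H * e"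
proof -
  define F where "F = Pow (fst ` I)"
  have fF: "finite F" using assms(1) unfolding F_def by simp
  have "\<forall>S\<in>F. \<exists>c. goodrep S c"
  proof
    fix S assume "S \<in> F"
    hence "finite S" unfolding F_def using assms(1) finite_subset by auto
    thus "\<exists>c. goodrep S c" by (rule bounded_rep)
  qed
  then have "\<exists>cf. \<forall>S\<in>F. goodrep S (cf S)" by (rule bchoice)
  then obtain cf where cfg: "\<forall>S\<in>F. goodrep S (cf S)" ..
  have cf1: "\<And>S. S\<in>F \<Longrightarrow> cf S \<ge> 0" using cfg unfolding goodrep_def by blast
  note cf2 = goodrepD[OF cfg[rule_format]]
  define H where "H = Max (cf ` F)"
  have FH: "\<And>S. S \<in> F \<Longrightarrow> cf S \<le> H" unfolding H_def using fF by simp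
  have "{} \<in> F" unfolding F_def by simp
  hence H0: "H \<ge> 0" using FH cf1 order_trans by blast
  have Peq: "P = (\<Inter>ab\<in>I. {x. inner (fst ab) x \<le> snd ab})"
    unfolding Pdef by (force simp: split_beta)
  have clP: "closed P" unfolding Peq by (intro closed_INT ballI closed_halfspace_le)
  have cvP: "convex P" unfolding Peq by (intro convex_INT ballI convex_halfspace_le)
  show ?thesis
  proof (intro exI[of _ H] conjI allI impI H0)
    fix x e assume e0: "(0::real) \<le> e" and viol: "\<forall>(a,b)\<in>I. inner a x - b \<le> e"
    define p where "p = closest_point P x"
    have pP: "p \<in> P" unfolding p_def using clP assms(3) by (rule closest_point_in_set)
    have pmin: "\<forall>y\<in>P. dist x p \<le> dist x y"
      unfolding p_def using closest_point_exists[OF clP assms(3)] by blast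
    define v where "v = x - p"
    have vdot: "\<And>y. y \<in> P \<Longrightarrow> inner v (y - p) \<le> 0"
      unfolding v_def using any_closest_point_dot[OF cvP clP pP _ pmin] by blast
    define J where "J = {ab\<in>I. inner (fst ab) p = snd ab}"
    define S where "S = fst ` J"
    have SF: "S \<in> F" unfolding S_def J_def F_def by auto
    have fS: "finite S" unfolding S_def J_def using assms(1) by simp
    have vK: "v \<in> convex_cone hull S"
    proof (rule ccontr)
      assume nv: "v \<notin> convex_cone hull S"
      obtain a b0 where ab: "inner a v < b0" "\<forall>z\<in>convex_cone hull S. b0 < inner a z"
        using separating_hyperplane_closed_point[OF convex_convex_cone_hull closed_cone_hull_finite[OF fS] nv]
        by blast
      have b0: "b0 < 0" using ab(2) convex_cone_hull_contains_0 by fastforce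
      have aS: "inner a s \<ge> 0" if sS: "s \<in> S" for s
      proof (rule ccontr)
        assume "\<not> inner a s \<ge> 0"
        hence neg: "inner a s < 0" by simp
        define t where "t = b0 / inner a s"
        have t0: "t \<ge> 0" unfolding t_def using b0 neg by (simp add: divide_nonpos_neg)
        have "t *\<^sub>R s \<in> convex_cone hull S"
          using convex_cone_hull_mul[of s S t] hull_subset[of S convex_cone] sS t0 by auto
        hence "b0 < inner a (t *\<^sub>R s)" using ab(2) by blast
        thus False unfolding t_def using neg by simp
      qed
      define d where "d = - a"
      have dv: "inner d v > 0" unfolding d_def using ab(1) b0 by simp
      have dS: "\<And>s. s \<in> S \<Longrightarrow> inner s d \<le> 0" unfolding d_def using aS by (simp add: inner_commute)
      define L where "L = (\<lambda>ab. (snd ab - inner (fst ab) p) / (\<bar>inner (fst ab) d\<bar> + 1)) ` (I - J)"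
      define \<tau> where "\<tau> = Min (insert 1 L)"
      have fL: "finite L" unfolding L_def using assms(1) by simp
      have Lpos: "\<And>l. l \<in> L \<Longrightarrow> l > 0"
      proof -
        fix l assume "l \<in> L"
        then obtain a' b' where ab': "(a',b') \<in> I - J" "l = (b' - inner a' p) / (\<bar>inner a' d\<bar> + 1)"
          unfolding L_def by auto
        have "inner a' p \<le> b'" using pP ab'(1) unfolding Pdef by auto
        moreover have "inner a' p \<noteq> b'" using ab'(1) unfolding J_def by auto
        ultimately show "l > 0" using ab'(2) by (simp add: add_pos_nonneg)
      qed
      have tau0: "\<tau> > 0" unfolding \<tau>_def using fL Lpos by simp
      have tauL: "\<And>l. l \<in> L \<Longrightarrow> \<tau> \<le> l" unfolding \<tau>_def using fL by simp
      define y where "y = p + \<tau> *\<^sub>R d"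
      have yP: "y \<in> P"
        unfolding Pdef
      proof (clarify)
        fix a' b' assume abI: "(a',b') \<in> I"
        show "inner a' y \<le> b'"
        proof (cases "(a',b') \<in> J")
          case True
          hence "a' \<in> S" "inner a' p = b'" unfolding S_def J_def by force+
          thus ?thesis unfolding y_def using dS[of a'] tau0
            by (simp add: inner_add_right mult_nonneg_nonpos)
        next
          case False
          hence "(b' - inner a' p) / (\<bar>inner a' d\<bar> + 1) \<in> L" unfolding L_def using abI by force
          hence "\<tau> \<le> (b' - inner a' p) / (\<bar>inner a' d\<bar> + 1)" by (rule tauL)
          hence "\<tau> * (\<bar>inner a' d\<bar> + 1) \<le> b' - inner a' p"
            by (simp add: pos_le_divide_eq add_pos_nonneg)
          moreover have "\<tau> * inner a' d \<le> \<tau> * (\<bar>inner a' d\<bar> + 1)"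
            using tau0 by (intro mult_left_mono) auto
          ultimately show ?thesis unfolding y_def by (simp add: inner_add_right)
        qed
      qed
      have "inner v (y - p) = \<tau> * inner d v" unfolding y_def by (simp add: inner_commute)
      also have "\<dots> > 0" using tau0 dv by simp
      finally show False using vdot[OF yP] by simp
    qed
    obtain \<mu> where mu: "\<forall>s\<in>S. \<mu> s \<ge> 0" "v = (\<Sum>s\<in>S. \<mu> s *\<^sub>R s)"
      using cone_rep[OF fS vK] by blast
    obtain \<nu> where nu: "\<forall>s\<in>S. \<nu> s \<ge> 0" "v = (\<Sum>s\<in>S. \<nu> s *\<^sub>R s)"
       "sum \<nu> S \<le> cf S * norm v"
      using cf2[OF SF mu(1)] mu(2) by auto
    have sv: "inner s v \<le> e" if sS: "s \<in> S" for s
    proof -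
      obtain b where "(s,b) \<in> J" using sS unfolding S_def by force
      hence "(s,b) \<in> I" "inner s p = b" unfolding J_def by auto
      hence "inner s x - inner s p \<le> e" using viol by fastforce
      thus ?thesis unfolding v_def by (simp add: inner_diff_right)
    qed
    have "norm v ^ 2 = inner v v" by (simp add: power2_norm_eq_inner)
    also have "\<dots> = (\<Sum>s\<in>S. \<nu> s * inner s v)"
      by (subst (1) nu(2)) (simp add: inner_sum_left)
    also have "\<dots> \<le> (\<Sum>s\<in>S. \<nu> s * e)"
      using nu(1) sv by (intro sum_mono mult_left_mono) auto
    also have "\<dots> = sum \<nu> S * e" by (simp add: sum_distrib_right)
    also have "\<dots> \<le> H * norm v * e"
    proof -
      have "cf S * norm v \<le> H * norm v" by (rule mult_right_mono[OF FH[OF SF] norm_ge_zero])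
      hence "sum \<nu> S \<le> H * norm v" using nu(3) by linarith
      thus ?thesis using e0 by (rule mult_right_mono)
    qed
    finally have sq: "norm v ^ 2 \<le> H * e * norm v" by (simp add: algebra_simps)
    have nv: "norm v \<le> H * e"
    proof (cases "norm v = 0")
      case True thus ?thesis using H0 e0 by simp
    next
      case False
      hence "norm v > 0" by simp
      thus ?thesis using sq by (simp add: power2_eq_square)
    qed
    have "infdist x P \<le> dist x p" using pP by (rule infdist_le)
    also have "\<dots> = norm v" unfolding v_def by (simp add: dist_norm)
    finally show "infdist x P \<le> H * e" using nv by simp
  qed
qed



lemma entry_le_infnorm: "\<bar>(M::real^'m^'k)$k$j\<bar> \<le> infnorm M"
proof -
  have "axis k (axis j 1) \<in> (Basis :: (real^'m^'k) set)"
    by (auto simp: Basis_vec_def)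
  from Basis_le_infnorm[OF this, of M] show ?thesis
    by (simp add: inner_axis)
qed

lemma infnorm_le_cart: "(\<And>i. \<bar>(x::real^'n)$i\<bar> \<le> c) \<Longrightarrow> infnorm x \<le> c"
  unfolding infnorm_cart by (rule cSup_least) auto

lemma mv_bound:
  fixes M :: "real^'m^'k" and w :: "real^'m" and C :: real
  assumes "\<And>j. \<bar>w$j\<bar> \<le> C"
  shows "infnorm (M *v w) \<le> CARD('m) * C * infnorm M"
proof (rule infnorm_le_cart)
  fix k
  have "\<bar>(M *v w)$k\<bar> = \<bar>\<Sum>j\<in>UNIV. M$k$j * w$j\<bar>" by (simp add: matrix_vector_mult_def)
  also have "\<dots> \<le> (\<Sum>j\<in>UNIV. \<bar>M$k$j\<bar> * \<bar>w$j\<bar>)" by (rule order_trans[OF sum_abs]) (simp add: abs_mult)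
  also have "\<dots> \<le> (\<Sum>j\<in>(UNIV::'m set). infnorm M * C)"
    using assms entry_le_infnorm infnorm_pos_le[of M] by (intro sum_mono mult_mono) auto
  also have "\<dots> = CARD('m) * C * infnorm M" by simp
  finally show "\<bar>(M *v w)$k\<bar> \<le> CARD('m) * C * infnorm M" .
qed

lemma mv_row: "(A *v x) $ k = inner (A$k) (x::real^'m)"
  by (simp add: matrix_vector_mult_def inner_vec_def mult.commute)

lemma hoffman_feas:
  fixes A :: "real^'m^'k"
  assumes "feas0 A \<beta> C \<noteq> {}"
  shows "\<exists>H\<ge>0. \<forall>w\<in>box0C C. infdist w (feas0 A \<beta> C) \<le> H * infnorm (A *v w - \<beta>)"
proof -
  define I where "I = range (\<lambda>i. (- axis i 1, 0::real)) \<union> range (\<lambda>i. (axis i 1, C))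
     \<union> range (\<lambda>k. (A$k, \<beta>$k)) \<union> range (\<lambda>k. (- A$k, - \<beta>$k))"
  have fI: "finite I" unfolding I_def by simp
  have ax: "\<And>i x. inner (axis i 1) (x::real^'m) = x$i" by (simp add: inner_axis')
  have Peq: "feas0 A \<beta> C = {x. \<forall>(a,b)\<in>I. inner a x \<le> b}"
  proof (intro set_eqI iffI)
    fix x assume "x \<in> feas0 A \<beta> C"
    hence "\<forall>i. 0 \<le> x$i \<and> x$i \<le> C" "\<And>k. inner (A$k) x = \<beta>$k"
      unfolding feas0_def box0C_def by (auto simp: mv_row[symmetric])
    thus "x \<in> {x. \<forall>(a,b)\<in>I. inner a x \<le> b}" unfolding I_def by (auto simp: ax)
  next
    fix x assume "x \<in> {x. \<forall>(a,b)\<in>I. inner a x \<le> b}"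
    hence hI: "\<And>a b. (a,b) \<in> I \<Longrightarrow> inner a x \<le> b" by auto
    have m1: "(- axis i 1, 0) \<in> I" "(axis i 1, C) \<in> I" "(A$i', \<beta>$i') \<in> I" "(-A$i', -\<beta>$i') \<in> I" for i i'
      unfolding I_def by auto
    have "\<forall>i. 0 \<le> x$i \<and> x$i \<le> C" using hI[OF m1(1)] hI[OF m1(2)] by (simp add: ax)
    moreover have "A *v x = \<beta>"
    proof (subst vec_eq_iff, intro allI)
      fix k
      have "inner (A$k) x \<le> \<beta>$k" "inner (-A$k) x \<le> - \<beta>$k" using hI[OF m1(3)] hI[OF m1(4)] by auto
      thus "(A *v x)$k = \<beta>$k" by (simp add: mv_row)
    qed
    ultimately show "x \<in> feas0 A \<beta> C" unfolding feas0_def box0C_def by auto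
  qed
  obtain H where H: "H \<ge> 0" "\<forall>x e. e \<ge> 0 \<longrightarrow> (\<forall>(a,b)\<in>I. inner a x - b \<le> e) \<longrightarrow> infdist x (feas0 A \<beta> C) \<le> H * e"
    using hoffman[OF fI Peq assms] by blast
  show ?thesis
  proof (intro exI[of _ H] conjI ballI H(1))
    fix w :: "real^'m" assume "w \<in> box0C C"
    hence wb: "\<forall>i. 0 \<le> w$i \<and> w$i \<le> C" unfolding box0C_def by auto
    have cmp: "\<bar>inner (A$k) w - \<beta>$k\<bar> \<le> infnorm (A *v w - \<beta>)" for k
      using component_le_infnorm_cart[of "A *v w - \<beta>" k] by (simp add: mv_row)
    define e where "e = infnorm (A *v w - \<beta>)"
    have e0: "e \<ge> 0" unfolding e_def by (rule infnorm_pos_le)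
    have c1: "inner (-axis i 1) w - 0 \<le> e" for i using wb[rule_format, of i] e0 by (simp add: ax)
    have c2: "inner (axis i 1) w - C \<le> e" for i using wb[rule_format, of i] e0 by (simp add: ax)
    have c3: "inner (A$k) w - \<beta>$k \<le> e" for k using cmp[of k] unfolding e_def by (simp add: abs_le_iff)
    have c4: "inner (-A$k) w - (-\<beta>$k) \<le> e" for k using cmp[of k] unfolding e_def by (simp add: abs_le_iff)
    have "\<forall>(a,b)\<in>I. inner a w - b \<le> infnorm (A *v w - \<beta>)"
      unfolding I_def e_def[symmetric] using c1 c2 c3 c4 by auto
    thus "infdist w (feas0 A \<beta> C) \<le> H * infnorm (A *v w - \<beta>)"
      using H(2) infnorm_pos_le by blast
  qed
qed



lemma mhat_facts:
  fixes A :: "real^'m^'k"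
  assumes "C \<ge> 0"
  shows "mhat A b C \<ge> 0" and "\<And>w. w \<in> box0C C \<Longrightarrow> mhat A b C \<le> infnorm (A *v w - b)"
    and "\<And>t. t > 0 \<Longrightarrow> feasn A b C t \<noteq> {}"
proof -
  have "0 \<in> box0C C" using assms unfolding box0C_def by simp
  hence ne: "box0C C \<noteq> {}" by blast
  show "mhat A b C \<ge> 0" unfolding mhat_def
    by (rule cINF_greatest[OF ne]) (rule infnorm_pos_le)
  have bb: "bdd_below ((\<lambda>w. infnorm (A *v w - b)) ` box0C C)"
    by (rule bdd_belowI2[where m=0]) (rule infnorm_pos_le)
  show "\<And>w. w \<in> box0C C \<Longrightarrow> mhat A b C \<le> infnorm (A *v w - b)"
    unfolding mhat_def by (rule cINF_lower[OF bb])
  fix t :: real assume "t > 0"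
  hence lt: "Inf ((\<lambda>w. infnorm (A *v w - b)) ` box0C C) < mhat A b C + t" unfolding mhat_def by simp
  have "(\<lambda>w. infnorm (A *v w - b)) ` box0C C \<noteq> {}" using ne by simp
  from cInf_lessD[OF this lt] obtain w where "w \<in> box0C C" "infnorm (A *v w - b) < mhat A b C + t"
    by (auto simp only: image_iff)
  hence "w \<in> feasn A b C t" unfolding feasn_def by (simp add: add.commute)
  thus "feasn A b C t \<noteq> {}" by blast
qed

lemma core:
  fixes A Ah :: "real^'m^'k" and C t E H :: real
  assumes C: "C > 0" and ne: "feas0 A \<beta> C \<noteq> {}" and H0: "H \<ge> 0"
    and H: "\<forall>w\<in>box0C C. infdist w (feas0 A \<beta> C) \<le> H * infnorm (A *v w - \<beta>)"
    and t: "t > 0"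
    and E: "E = CARD('m) * C * infnorm (Ah - A) + infnorm (bh - \<beta>)"
  shows "feasn Ah bh C t \<noteq> {}"
    and "\<forall>w\<in>feasn Ah bh C t. infdist w (feas0 A \<beta> C) \<le> H * (t + 2 * E)"
    and "E \<le> t \<Longrightarrow> feas0 A \<beta> C \<subseteq> feasn Ah bh C t"
proof -
  show "feasn Ah bh C t \<noteq> {}" using mhat_facts(3)[where C=C and A=Ah and b=bh and t=t] C t by simp
  have diff: "infnorm ((Ah *v w - bh) - (A *v w - \<beta>)) \<le> E" if "w \<in> box0C C" for w
  proof -
    have wb: "\<And>j. \<bar>w$j\<bar> \<le> C" using that unfolding box0C_def by auto
    have "(Ah *v w - bh) - (A *v w - \<beta>) = (Ah - A) *v w + (-(bh - \<beta>))"
      by (simp add: matrix_vector_mult_diff_rdistrib algebra_simps)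
    hence "infnorm ((Ah *v w - bh) - (A *v w - \<beta>)) = infnorm ((Ah - A) *v w + (-(bh - \<beta>)))"
      by (rule arg_cong)
    also have "\<dots> \<le> infnorm ((Ah - A) *v w) + infnorm (-(bh - \<beta>))" by (rule infnorm_triangle)
    also have "\<dots> = infnorm ((Ah - A) *v w) + infnorm (bh - \<beta>)" by (simp only: infnorm_neg)
    also have "\<dots> \<le> E" unfolding E using mv_bound[OF wb, of "Ah - A"] by simp
    finally show ?thesis .
  qed
  have d1: "infnorm (A *v w - \<beta>) \<le> infnorm (Ah *v w - bh) + E" if "w \<in> box0C C" for w
    using infnorm_triangle[of "Ah *v w - bh" "(A *v w - \<beta>) - (Ah *v w - bh)"] diff[OF that]
    by (simp add: infnorm_sub)
  have d2: "infnorm (Ah *v w - bh) \<le> infnorm (A *v w - \<beta>) + E" if "w \<in> box0C C" for w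
    using infnorm_triangle[of "A *v w - \<beta>" "(Ah *v w - bh) - (A *v w - \<beta>)"] diff[OF that]
    by simp
  obtain w0 where w0: "w0 \<in> feas0 A \<beta> C" using ne by blast
  hence w0b: "w0 \<in> box0C C" and w0e: "A *v w0 - \<beta> = 0" unfolding feas0_def by auto
  have mh: "mhat Ah bh C \<le> E"
    using mhat_facts(2)[OF _ w0b, of Ah bh] d2[OF w0b] C w0e by (simp add: infnorm_0)
  show "\<forall>w\<in>feasn Ah bh C t. infdist w (feas0 A \<beta> C) \<le> H * (t + 2 * E)"
  proof
    fix w assume "w \<in> feasn Ah bh C t"
    hence wb: "w \<in> box0C C" and wl: "infnorm (Ah *v w - bh) \<le> t + mhat Ah bh C" unfolding feasn_def by auto
    have "infnorm (A *v w - \<beta>) \<le> t + 2 * E" using d1[OF wb] wl mh by simp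
    hence "H * infnorm (A *v w - \<beta>) \<le> H * (t + 2 * E)" using H0 by (rule mult_left_mono)
    thus "infdist w (feas0 A \<beta> C) \<le> H * (t + 2 * E)" using H wb by (meson order_trans)
  qed
  assume Et: "E \<le> t"
  show "feas0 A \<beta> C \<subseteq> feasn Ah bh C t"
  proof
    fix w assume w: "w \<in> feas0 A \<beta> C"
    hence wb: "w \<in> box0C C" and we: "A *v w - \<beta> = 0" unfolding feas0_def by auto
    have "infnorm (Ah *v w - bh) \<le> t + mhat Ah bh C"
      using d2[OF wb] we Et mhat_facts(1)[of C Ah bh] C by (simp add: infnorm_0)
    thus "w \<in> feasn Ah bh C t" using wb unfolding feasn_def by auto
  qed
qed

lemma hausd_bound:
  assumes "S \<noteq> {}" "T \<noteq> {}" "\<forall>s\<in>S. infdist s T \<le> r" "\<forall>t\<in>T. infdist t S \<le> r"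
  shows "\<bar>hausd S T\<bar> \<le> r"
proof -
  obtain s0 where s0: "s0 \<in> S" using assms(1) by blast
  have a1: "(SUP s\<in>S. infdist s T) \<le> r" using assms(1,3) by (intro cSUP_least) auto
  have a2: "(SUP t\<in>T. infdist t S) \<le> r" using assms(2,4) by (intro cSUP_least) auto
  have "infdist s0 T \<le> (SUP s\<in>S. infdist s T)"
    using s0 assms(3) by (intro cSUP_upper) (auto intro: bdd_aboveI2)
  hence "0 \<le> (SUP s\<in>S. infdist s T)" using infdist_nonneg order_trans by blast
  thus ?thesis unfolding hausd_def using a1 a2 by auto
qed

lemma outer_prob_lessD:
  assumes "outer_prob P S < e"
  shows "\<exists>T\<in>sets P. S \<inter> space P \<subseteq> T \<and> measure P T < e"
proof -
  have "{measure P T | T. T \<in> sets P \<and> S \<inter> space P \<subseteq> T} \<noteq> {}" by blast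
  from cInf_lessD[OF this assms[unfolded outer_prob_def]] show ?thesis by blast
qed

lemma outer_prob_le:
  assumes "T \<in> sets P" "S \<inter> space P \<subseteq> T"
  shows "outer_prob P S \<le> measure P T"
  unfolding outer_prob_def using assms
  by (intro cInf_lower) (auto intro: bdd_belowI[of _ 0])



lemma prob_wrap:
  assumes hA: "bigOp P dA (\<lambda>n. 1 / sqrt n)" and hB: "bigOp P dB (\<lambda>n. 1 / sqrt n)"
    and det: "\<And>B1 B2. B1 > 0 \<Longrightarrow> B2 > 0 \<Longrightarrow> \<exists>B>0. \<exists>N. \<forall>n\<ge>N. \<forall>\<omega>\<in>space P.
       \<bar>dA n \<omega>\<bar> \<le> B1 / sqrt n \<longrightarrow> \<bar>dB n \<omega>\<bar> \<le> B2 / sqrt n \<longrightarrow> \<bar>X n \<omega>\<bar> \<le> B * r n"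
  shows "bigOp P X r"
  unfolding bigOp_def
proof (intro allI impI)
  fix \<epsilon> :: real assume e: "\<epsilon> > 0"
  hence e2: "\<epsilon>/2 > 0" by simp
  obtain B1 N1 where B1: "B1 > 0" "\<forall>n\<ge>N1. outer_prob P {\<omega>\<in>space P. \<bar>dA n \<omega>\<bar> > B1 * (1 / sqrt n)} < \<epsilon>/2"
    using hA e2 unfolding bigOp_def by blast
  obtain B2 N2 where B2: "B2 > 0" "\<forall>n\<ge>N2. outer_prob P {\<omega>\<in>space P. \<bar>dB n \<omega>\<bar> > B2 * (1 / sqrt n)} < \<epsilon>/2"
    using hB e2 unfolding bigOp_def by blast
  obtain B N where BN: "B > 0" "\<forall>n\<ge>N. \<forall>\<omega>\<in>space P.
       \<bar>dA n \<omega>\<bar> \<le> B1 / sqrt n \<longrightarrow> \<bar>dB n \<omega>\<bar> \<le> B2 / sqrt n \<longrightarrow> \<bar>X n \<omega>\<bar> \<le> B * r n"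
    using det[OF B1(1) B2(1)] by blast
  show "\<exists>B>0. \<exists>N. \<forall>n\<ge>N. outer_prob P {\<omega> \<in> space P. B * r n < \<bar>X n \<omega>\<bar>} < \<epsilon>"
  proof (intro exI[of _ B] conjI exI[of _ "max N (max N1 N2)"] allI impI BN(1))
    fix n assume n: "max N (max N1 N2) \<le> n"
    obtain T1 where T1: "T1 \<in> sets P" "{\<omega>\<in>space P. \<bar>dA n \<omega>\<bar> > B1 * (1 / sqrt n)} \<inter> space P \<subseteq> T1"
      "measure P T1 < \<epsilon>/2"
      using outer_prob_lessD[OF B1(2)[rule_format, of n]] n by auto
    obtain T2 where T2: "T2 \<in> sets P" "{\<omega>\<in>space P. \<bar>dB n \<omega>\<bar> > B2 * (1 / sqrt n)} \<inter> space P \<subseteq> T2"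
      "measure P T2 < \<epsilon>/2"
      using outer_prob_lessD[OF B2(2)[rule_format, of n]] n by auto
    have sub: "{\<omega> \<in> space P. B * r n < \<bar>X n \<omega>\<bar>} \<inter> space P \<subseteq> T1 \<union> T2"
    proof
      fix \<omega> assume w: "\<omega> \<in> {\<omega> \<in> space P. B * r n < \<bar>X n \<omega>\<bar>} \<inter> space P"
      show "\<omega> \<in> T1 \<union> T2"
      proof (rule ccontr)
        assume "\<omega> \<notin> T1 \<union> T2"
        hence "\<not> \<bar>dA n \<omega>\<bar> > B1 * (1 / sqrt n)" "\<not> \<bar>dB n \<omega>\<bar> > B2 * (1 / sqrt n)"
          using T1(2) T2(2) w by auto
        hence "\<bar>dA n \<omega>\<bar> \<le> B1 / sqrt n" "\<bar>dB n \<omega>\<bar> \<le> B2 / sqrt n" by auto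
        hence "\<bar>X n \<omega>\<bar> \<le> B * r n" using BN(2) n w by auto
        thus False using w by auto
      qed
    qed
    have "outer_prob P {\<omega> \<in> space P. B * r n < \<bar>X n \<omega>\<bar>} \<le> measure P (T1 \<union> T2)"
      using sub T1(1) T2(1) by (intro outer_prob_le) auto
    also have "\<dots> \<le> measure P T1 + measure P T2" using T1(1) T2(1) by (rule measure_Un_le)
    also have "\<dots> < \<epsilon>" using T1(3) T2(3) by simp
    finally show "outer_prob P {\<omega> \<in> space P. B * r n < \<bar>X n \<omega>\<bar>} < \<epsilon>" .
  qed
qed

theorem lemma4:
  fixes A :: "real^'m^'k" and \<beta> :: "real^'k" and C :: real
    and P :: "'w measure"
    and Ahat :: "nat \<Rightarrow> 'w \<Rightarrow> real^'m^'k" and \<beta>hat :: "nat \<Rightarrow> 'w \<Rightarrow> real^'k"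
    and \<kappa> :: "nat \<Rightarrow> real"
  assumes "prob_space P"
    and "C > 0"
    and "feas0 A \<beta> C \<noteq> {}"
    and "\<And>n. Ahat n \<in> borel_measurable P"
    and "\<And>n. \<beta>hat n \<in> borel_measurable P"
    and "bigOp P (\<lambda>n \<omega>. infnorm (Ahat n \<omega> - A)) (\<lambda>n. 1 / sqrt n)"
    and "bigOp P (\<lambda>n \<omega>. infnorm (\<beta>hat n \<omega> - \<beta>)) (\<lambda>n. 1 / sqrt n)"
    and "\<And>n. \<kappa> n > 0"
  shows "(filterlim \<kappa> at_top sequentially \<and> (\<lambda>n. \<kappa> n / sqrt n) \<longlonglongrightarrow> 0 \<longrightarrow>
           bigOp P (\<lambda>n \<omega>. hausd (feasn (Ahat n \<omega>) (\<beta>hat n \<omega>) C (\<kappa> n / sqrt n)) (feas0 A \<beta> C))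
                   (\<lambda>n. \<kappa> n / sqrt n))
       \<and> (rank A = CARD('m) \<and> bounded (range \<kappa>) \<longrightarrow>
           bigOp P (\<lambda>n \<omega>. hausd (feasn (Ahat n \<omega>) (\<beta>hat n \<omega>) C (\<kappa> n / sqrt n)) (feas0 A \<beta> C))
                   (\<lambda>n. 1 / sqrt n))"
proof -
  obtain H where H0: "H \<ge> 0" and Hb: "\<forall>w\<in>box0C C. infdist w (feas0 A \<beta> C) \<le> H * infnorm (A *v w - \<beta>)"
    using hoffman_feas[OF assms(3)] by blast
  define D where "D = real CARD('m) * C"
  have D0: "D \<ge> 0" unfolding D_def using assms(2) by simp
  define E where "E = (\<lambda>n \<omega>. D * infnorm (Ahat n \<omega> - A) + infnorm (\<beta>hat n \<omega> - \<beta>))"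
  note core_i = core[OF assms(2) assms(3) H0 Hb]
  have Ebound: "E n \<omega> \<le> (D * B1 + B2) / sqrt n"
    if "\<bar>infnorm (Ahat n \<omega> - A)\<bar> \<le> B1 / sqrt n" "\<bar>infnorm (\<beta>hat n \<omega> - \<beta>)\<bar> \<le> B2 / sqrt n" for n \<omega> B1 B2
  proof -
    have "D * infnorm (Ahat n \<omega> - A) \<le> D * (B1 / sqrt n)"
      using that(1) D0 by (intro mult_left_mono) auto
    moreover have "infnorm (\<beta>hat n \<omega> - \<beta>) \<le> B2 / sqrt n" using that(2) by auto
    ultimately show ?thesis unfolding E_def by (simp add: add_divide_distrib)
  qed
  have E0: "E n \<omega> \<ge> 0" for n \<omega> unfolding E_def
    using D0 infnorm_pos_le[of "Ahat n \<omega> - A"] infnorm_pos_le[of "\<beta>hat n \<omega> - \<beta>"]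
    by (intro add_nonneg_nonneg mult_nonneg_nonneg) auto
  show ?thesis
  proof (intro conjI impI)
    assume asm: "filterlim \<kappa> at_top sequentially \<and> (\<lambda>n. \<kappa> n / sqrt n) \<longlonglongrightarrow> 0"
    show "bigOp P (\<lambda>n \<omega>. hausd (feasn (Ahat n \<omega>) (\<beta>hat n \<omega>) C (\<kappa> n / sqrt n)) (feas0 A \<beta> C))
                   (\<lambda>n. \<kappa> n / sqrt n)"
    proof (rule prob_wrap[OF assms(6) assms(7)])
      fix B1 B2 :: real assume B1: "B1 > 0" and B2: "B2 > 0"
      have "eventually (\<lambda>n. D * B1 + B2 \<le> \<kappa> n) sequentially"
        using asm unfolding filterlim_at_top by blast
      then obtain N3 where N3: "\<And>n. n \<ge> N3 \<Longrightarrow> D * B1 + B2 \<le> \<kappa> n"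
        unfolding eventually_sequentially by blast
      show "\<exists>B>0. \<exists>N. \<forall>n\<ge>N. \<forall>\<omega>\<in>space P.
       \<bar>infnorm (Ahat n \<omega> - A)\<bar> \<le> B1 / sqrt n \<longrightarrow> \<bar>infnorm (\<beta>hat n \<omega> - \<beta>)\<bar> \<le> B2 / sqrt n \<longrightarrow>
       \<bar>hausd (feasn (Ahat n \<omega>) (\<beta>hat n \<omega>) C (\<kappa> n / sqrt n)) (feas0 A \<beta> C)\<bar> \<le> B * (\<kappa> n / sqrt n)"
      proof (intro exI[of _ "3 * H + 1"] conjI exI[of _ "max N3 1"] allI impI ballI)
        show "3 * H + 1 > 0" using H0 by simp
        fix n \<omega> assume n: "max N3 1 \<le> n"
          and a1: "\<bar>infnorm (Ahat n \<omega> - A)\<bar> \<le> B1 / sqrt n" and a2: "\<bar>infnorm (\<beta>hat n \<omega> - \<beta>)\<bar> \<le> B2 / sqrt n"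
        have sq: "sqrt n > 0" using n by simp
        define t where "t = \<kappa> n / sqrt n"
        have t0: "t > 0" unfolding t_def using sq assms(8)[of n] by simp
        have "E n \<omega> \<le> (D * B1 + B2) / sqrt n" by (rule Ebound[OF a1 a2])
        also have "\<dots> \<le> t" unfolding t_def using N3[of n] n sq by (simp add: divide_right_mono)
        finally have Et: "E n \<omega> \<le> t" .
        have Edef: "E n \<omega> = real CARD('m) * C * infnorm (Ahat n \<omega> - A) + infnorm (\<beta>hat n \<omega> - \<beta>)"
          unfolding E_def D_def ..
        note cc = core_i[OF t0 Edef]
        have r0: "H * (t + 2 * E n \<omega>) \<ge> 0" using H0 t0 E0[of n \<omega>] by simp
        have "\<bar>hausd (feasn (Ahat n \<omega>) (\<beta>hat n \<omega>) C t) (feas0 A \<beta> C)\<bar> \<le> H * (t + 2 * E n \<omega>)"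
        proof (rule hausd_bound[OF cc(1) assms(3) cc(2)])
          show "\<forall>z\<in>feas0 A \<beta> C. infdist z (feasn (Ahat n \<omega>) (\<beta>hat n \<omega>) C t) \<le> H * (t + 2 * E n \<omega>)"
            using cc(3)[OF Et] r0 by auto
        qed
        also have "\<dots> \<le> H * (3 * t)" using H0 Et by (intro mult_left_mono) auto
        also have "\<dots> \<le> (3 * H + 1) * t" using t0 by (simp add: algebra_simps)
        finally show "\<bar>hausd (feasn (Ahat n \<omega>) (\<beta>hat n \<omega>) C (\<kappa> n / sqrt n)) (feas0 A \<beta> C)\<bar> \<le> (3 * H + 1) * (\<kappa> n / sqrt n)"
          unfolding t_def .
      qed
    qed
  next
    assume asm: "rank A = CARD('m) \<and> bounded (range \<kappa>)"
    hence inj: "inj ((*v) A)" using full_rank_injective by blast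
    obtain w0 where w0: "w0 \<in> feas0 A \<beta> C" using assms(3) by blast
    have F0: "feas0 A \<beta> C = {w0}"
    proof (intro set_eqI iffI)
      fix z assume "z \<in> feas0 A \<beta> C"
      hence "A *v z = A *v w0" using w0 unfolding feas0_def by auto
      thus "z \<in> {w0}" using inj by (auto dest: injD)
    qed (use w0 in auto)
    obtain K0 where K0: "\<And>n. \<bar>\<kappa> n\<bar> \<le> K0" using asm unfolding bounded_iff by auto
    have K00: "K0 \<ge> 0" using K0[of 0] by simp
    show "bigOp P (\<lambda>n \<omega>. hausd (feasn (Ahat n \<omega>) (\<beta>hat n \<omega>) C (\<kappa> n / sqrt n)) (feas0 A \<beta> C))
                   (\<lambda>n. 1 / sqrt n)"
    proof (rule prob_wrap[OF assms(6) assms(7)])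
      fix B1 B2 :: real assume B1: "B1 > 0" and B2: "B2 > 0"
      define B where "B = H * (K0 + 2 * (D * B1 + B2)) + 1"
      show "\<exists>B>0. \<exists>N. \<forall>n\<ge>N. \<forall>\<omega>\<in>space P.
       \<bar>infnorm (Ahat n \<omega> - A)\<bar> \<le> B1 / sqrt n \<longrightarrow> \<bar>infnorm (\<beta>hat n \<omega> - \<beta>)\<bar> \<le> B2 / sqrt n \<longrightarrow>
       \<bar>hausd (feasn (Ahat n \<omega>) (\<beta>hat n \<omega>) C (\<kappa> n / sqrt n)) (feas0 A \<beta> C)\<bar> \<le> B * (1 / sqrt n)"
      proof (intro exI[of _ B] conjI exI[of _ "1::nat"] allI impI ballI)
        have "D * B1 \<ge> 0" using D0 B1 by simp
        hence "H * (K0 + 2 * (D * B1 + B2)) \<ge> 0" using H0 K00 B2 by simp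
        thus "B > 0" unfolding B_def by linarith
        fix n \<omega> assume n: "1 \<le> n"
          and a1: "\<bar>infnorm (Ahat n \<omega> - A)\<bar> \<le> B1 / sqrt n" and a2: "\<bar>infnorm (\<beta>hat n \<omega> - \<beta>)\<bar> \<le> B2 / sqrt n"
        have sq: "sqrt n > 0" using n by simp
        define t where "t = \<kappa> n / sqrt n"
        have t0: "t > 0" unfolding t_def using sq assms(8)[of n] by simp
        have tK: "t \<le> K0 / sqrt n" unfolding t_def using K0[of n] sq by (simp add: divide_right_mono)
        have Eb: "E n \<omega> \<le> (D * B1 + B2) / sqrt n" by (rule Ebound[OF a1 a2])
        have Edef: "E n \<omega> = real CARD('m) * C * infnorm (Ahat n \<omega> - A) + infnorm (\<beta>hat n \<omega> - \<beta>)"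
          unfolding E_def D_def ..
        note cc = core_i[OF t0 Edef]
        define Fn where "Fn = feasn (Ahat n \<omega>) (\<beta>hat n \<omega>) C t"
        obtain w1 where w1: "w1 \<in> Fn" using cc(1) unfolding Fn_def by blast
        have "\<bar>hausd Fn (feas0 A \<beta> C)\<bar> \<le> H * (t + 2 * E n \<omega>)"
        proof (rule hausd_bound[OF cc(1)[folded Fn_def] assms(3) cc(2)[folded Fn_def]])
          show "\<forall>z\<in>feas0 A \<beta> C. infdist z Fn \<le> H * (t + 2 * E n \<omega>)"
          proof
            fix z assume "z \<in> feas0 A \<beta> C"
            hence z: "z = w0" using F0 by auto
            have "infdist z Fn \<le> dist z w1" using w1 by (rule infdist_le)
            also have "\<dots> = infdist w1 (feas0 A \<beta> C)" using z F0 by (simp add: dist_commute)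
            also have "\<dots> \<le> H * (t + 2 * E n \<omega>)" using cc(2) w1 unfolding Fn_def by blast
            finally show "infdist z Fn \<le> H * (t + 2 * E n \<omega>)" .
          qed
        qed
        also have "\<dots> \<le> H * (K0 / sqrt n + 2 * ((D * B1 + B2) / sqrt n))"
          using H0 tK Eb by (intro mult_left_mono) linarith+
        also have "\<dots> = (B - 1) * (1 / sqrt n)" unfolding B_def by (simp add: add_divide_distrib[symmetric] algebra_simps)
        also have "\<dots> \<le> B * (1 / sqrt n)" using sq by (simp add: field_simps)
        finally show "\<bar>hausd (feasn (Ahat n \<omega>) (\<beta>hat n \<omega>) C (\<kappa> n / sqrt n)) (feas0 A \<beta> C)\<bar> \<le> B * (1 / sqrt n)"
          unfolding Fn_def t_def .
      qed
    qed
  qed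
qed


end
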